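(* Consider the two-individual system under (h1), (h2), (h3), and suppose $M>0$. Let $x_*=-\frac{1-\sqrt{1-(\tanh M)^2}}{\tanh M}$. Then there exists an integer $m\ge1$ such that either individual 2 acts at some time in $(0,(m+1)T]$, or individual 2 has not acted on $[0,mT]$ and $x_2(mT)>x_*$.
   Context: Two-individual model ($n=2$): parameters $\sigma_A,\sigma_S\ge 0$, $\sigma_C>0$, $\mu_S\in[0,1]$, $\mu_C>0$, $r>0$, $\tau\in(0,1)$, $\alpha_1,\alpha_2\in(-1,1)$. States $x_i\in(-1,1)$, $y_i\in[0,1]$, with $\gamma_1=y_2$, $\gamma_2=y_1$. Between action events: $\dot x_i=[\sigma_A\alpha_i+\sigma_S(\gamma_i-\mu_S)]\,\sigma_C(\gamma_i+\mu_C)(1-x_i)(1+x_i)$, $\dot y_i=-ry_i$. Individual $i$ "acts" at time $t$ when $x_i(t)$ reaches $\tau$; immediately afterwards $x_i$ is reset to $0$ and $y_i$ to $1$, and evolution resumes. Hypotheses: (h1) $\sigma_A\alpha_1-\sigma_S\mu_S>0$; (h2) $\sigma_A\alpha_2-\sigma_S\mu_S\le0$; (h3) $x_1(0)=y_1(0)=y_2(0)=0$ and $x_2(0)\in(-1,\tau)$. Constants: $A_1=(\sigma_A\alpha_1-\sigma_S\mu_S)\sigma_C\mu_C$, $T=\tanh^{-1}(\tau)/A_1$, $A=(\sigma_A\alpha_2-\sigma_S\mu_S)\sigma_C\mu_C$, $B=-\frac1r\big[(\sigma_A\alpha_2-\sigma_S\mu_S)\sigma_C+\sigma_S\sigma_C\mu_C\big]$,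 $C=-\frac{\sigma_S\sigma_C}{2r}$, $M=AT+Be^{-rT}+Ce^{-2rT}-B-C$. *)

theory Defs
  imports "HOL-Analysis.Analysis"
begin

definition xfield :: "real \<Rightarrow> real \<Rightarrow> real \<Rightarrow> real \<Rightarrow> real \<Rightarrow> real \<Rightarrow> real \<Rightarrow> real \<Rightarrow> real" where
  "xfield sA sS sC muS muC alpha gamma x =
     (sA * alpha + sS * (gamma - muS)) * sC * (gamma + muC) * (1 - x) * (1 + x)"

text \<open>Solution of the two-individual hybrid system on [0,\<infinity>).
  S1, S2 are the sets of action times of individual 1 and 2.  States are
  right-continuous: at an action time t of individual i, x_i(t) = 0 and y_i(t) = 1
  (the values immediately after the reset), while x_i(s) \<rightarrow> tau as s \<rightarrow> t from the left.
  Between events the ODEs hold (two-sided derivatives off the event times, right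
  derivatives everywhere), and x_i stays below tau, so an individual acts exactly
  when x_i reaches tau.  gamma_1 = y_2, gamma_2 = y_1.\<close>
definition two_ind_solution ::
  "real \<Rightarrow> real \<Rightarrow> real \<Rightarrow> real \<Rightarrow> real \<Rightarrow> real \<Rightarrow> real \<Rightarrow> real \<Rightarrow> real \<Rightarrow>
   (real \<Rightarrow> real) \<Rightarrow> (real \<Rightarrow> real) \<Rightarrow> (real \<Rightarrow> real) \<Rightarrow> (real \<Rightarrow> real) \<Rightarrow>
   real set \<Rightarrow> real set \<Rightarrow> bool" where
  "two_ind_solution sA sS sC muS muC r tau a1 a2 x1 x2 y1 y2 S1 S2 \<longleftrightarrow>
     S1 \<subseteq> {0<..} \<and> S2 \<subseteq> {0<..} \<and>
     (\<forall>b. finite (S1 \<inter> {..b}) \<and> finite (S2 \<inter> {..b})) \<and>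
     (\<forall>t\<ge>0. x1 t \<in> {-1<..<1} \<and> x2 t \<in> {-1<..<1} \<and> y1 t \<in> {0..1} \<and> y2 t \<in> {0..1}) \<and>
     (\<forall>t\<ge>0. x1 t < tau \<and> x2 t < tau) \<and>
     (\<forall>t\<ge>0.
        (x1 has_real_derivative xfield sA sS sC muS muC a1 (y2 t) (x1 t)) (at t within {t..}) \<and>
        (x2 has_real_derivative xfield sA sS sC muS muC a2 (y1 t) (x2 t)) (at t within {t..}) \<and>
        (y1 has_real_derivative (- r * y1 t)) (at t within {t..}) \<and>
        (y2 has_real_derivative (- r * y2 t)) (at t within {t..})) \<and>
     (\<forall>t>0. t \<notin> S1 \<union> S2 \<longrightarrow>
        (x1 has_real_derivative xfield sA sS sC muS muC a1 (y2 t) (x1 t)) (at t) \<and>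
        (x2 has_real_derivative xfield sA sS sC muS muC a2 (y1 t) (x2 t)) (at t) \<and>
        (y1 has_real_derivative (- r * y1 t)) (at t) \<and>
        (y2 has_real_derivative (- r * y2 t)) (at t)) \<and>
     (\<forall>t>0. t \<notin> S1 \<longrightarrow> isCont x1 t \<and> isCont y1 t) \<and>
     (\<forall>t>0. t \<notin> S2 \<longrightarrow> isCont x2 t \<and> isCont y2 t) \<and>
     (\<forall>t\<in>S1. x1 t = 0 \<and> y1 t = 1 \<and> (x1 \<longlongrightarrow> tau) (at_left t)) \<and>
     (\<forall>t\<in>S2. x2 t = 0 \<and> y2 t = 1 \<and> (x2 \<longlongrightarrow> tau) (at_left t))"

definition cA1 :: "real \<Rightarrow> real \<Rightarrow> real \<Rightarrow> real \<Rightarrow> real \<Rightarrow> real \<Rightarrow> real" where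
  "cA1 sA sS sC muS muC a1 = (sA * a1 - sS * muS) * sC * muC"

definition cT :: "real \<Rightarrow> real \<Rightarrow> real \<Rightarrow> real \<Rightarrow> real \<Rightarrow> real \<Rightarrow> real \<Rightarrow> real" where
  "cT sA sS sC muS muC a1 tau = artanh tau / cA1 sA sS sC muS muC a1"

definition cA :: "real \<Rightarrow> real \<Rightarrow> real \<Rightarrow> real \<Rightarrow> real \<Rightarrow> real \<Rightarrow> real" where
  "cA sA sS sC muS muC a2 = (sA * a2 - sS * muS) * sC * muC"

definition cB :: "real \<Rightarrow> real \<Rightarrow> real \<Rightarrow> real \<Rightarrow> real \<Rightarrow> real \<Rightarrow> real \<Rightarrow> real" where
  "cB sA sS sC muS muC r a2 = - (1 / r) * ((sA * a2 - sS * muS) * sC + sS * sC * muC)"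

definition cC :: "real \<Rightarrow> real \<Rightarrow> real \<Rightarrow> real" where
  "cC sS sC r = - (sS * sC) / (2 * r)"

definition cM :: "real \<Rightarrow> real \<Rightarrow> real \<Rightarrow> real \<Rightarrow> real \<Rightarrow> real \<Rightarrow> real \<Rightarrow> real \<Rightarrow> real \<Rightarrow> real" where
  "cM sA sS sC muS muC r tau a1 a2 =
     (let T = cT sA sS sC muS muC a1 tau;
          A = cA sA sS sC muS muC a2;
          B = cB sA sS sC muS muC r a2;
          C = cC sS sC r
      in A * T + B * exp (- r * T) + C * exp (- 2 * r * T) - B - C)"

end

theory Submission imports Defs begin

lemma tanh_artanh_real:
  assumes "-1 < x" "x < (1::real)" shows "tanh (artanh x) = x"
proof -
  have q: "(1 + x) / (1 - x) > 0" using assms by simp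
  have "-2 * artanh x = - ln ((1 + x) / (1 - x))" by (simp add: artanh_def)
  then have "exp (-2 * artanh x) = inverse ((1 + x) / (1 - x))"
    using q by (simp add: exp_minus)
  then have e: "exp (-2 * artanh x) = (1 - x) / (1 + x)" by simp
  have "tanh (artanh x) = (1 - (1 - x) / (1 + x)) / (1 + (1 - x) / (1 + x))"
    by (simp only: tanh_real_altdef e)
  also have "\<dots> = x" using assms by (simp add: field_simps)
  finally show ?thesis .
qed

lemma cont_closed:
  fixes f :: "real \<Rightarrow> real"
  assumes "(f has_real_derivative D) (at a within {a..})" "\<And>t. a < t \<Longrightarrow> t \<le> b \<Longrightarrow> isCont f t"
  shows "continuous_on {a..b} f"
proof (clarsimp simp: continuous_on_eq_continuous_within)
  fix x assume x: "a \<le> x" "x \<le> b"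
  show "continuous (at x within {a..b}) f"
  proof (cases "x = a")
    case True
    have c: "continuous (at a within {a..}) f" using assms(1) by (rule DERIV_continuous)
    show ?thesis using continuous_within_subset[OF c, of "{a..b}"] True by auto
  next
    case False then show ?thesis using assms(2) x by (simp add: continuous_at_imp_continuous_within)
  qed
qed

lemma artanh_less:
  assumes "-1 < x" "x < 1" "-1 < y" "y < (1::real)" "x < y" shows "artanh x < artanh y"
proof (rule ccontr)
  assume "\<not> ?thesis"
  then have "tanh (artanh y) \<le> tanh (artanh x)"
    by (simp add: strict_mono_less_eq[OF tanh_real_strict_mono])
  then show False using assms by (simp add: tanh_artanh_real)
qed

context
  fixes sA sS sC muS muC r tau a1 a2 :: real
    and x1 x2 y1 y2 :: "real \<Rightarrow> real" and S1 S2 :: "real set"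
  assumes pos: "sC > 0" "muC > 0" "r > 0" and tau: "0 < tau" "tau < 1"
    and h1: "sA * a1 - sS * muS > 0"
    and sol: "two_ind_solution sA sS sC muS muC r tau a1 a2 x1 x2 y1 y2 S1 S2"
    and S2e: "S2 = {}"
begin

lemma S1pos: "t \<in> S1 \<Longrightarrow> t > 0" using sol unfolding two_ind_solution_def by auto
lemma S1fin: "finite (S1 \<inter> {..b})" using sol unfolding two_ind_solution_def by auto
lemma rng: "t \<ge> 0 \<Longrightarrow> x1 t \<in> {-1<..<1} \<and> x2 t \<in> {-1<..<1}" using sol unfolding two_ind_solution_def by auto
lemma below: "t \<ge> 0 \<Longrightarrow> x1 t < tau \<and> x2 t < tau" using sol unfolding two_ind_solution_def by auto
lemma rd: "t \<ge> 0 \<Longrightarrow>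
        (x1 has_real_derivative xfield sA sS sC muS muC a1 (y2 t) (x1 t)) (at t within {t..}) \<and>
        (x2 has_real_derivative xfield sA sS sC muS muC a2 (y1 t) (x2 t)) (at t within {t..}) \<and>
        (y1 has_real_derivative (- r * y1 t)) (at t within {t..}) \<and>
        (y2 has_real_derivative (- r * y2 t)) (at t within {t..})"
  using sol unfolding two_ind_solution_def by auto
lemma ad: "t > 0 \<Longrightarrow> t \<notin> S1 \<Longrightarrow>
        (x1 has_real_derivative xfield sA sS sC muS muC a1 (y2 t) (x1 t)) (at t) \<and>
        (x2 has_real_derivative xfield sA sS sC muS muC a2 (y1 t) (x2 t)) (at t) \<and>
        (y1 has_real_derivative (- r * y1 t)) (at t) \<and>
        (y2 has_real_derivative (- r * y2 t)) (at t)"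
  using sol S2e unfolding two_ind_solution_def by auto
lemma c1: "t > 0 \<Longrightarrow> t \<notin> S1 \<Longrightarrow> isCont x1 t \<and> isCont y1 t"
  using sol unfolding two_ind_solution_def by auto
lemma c2: "t > 0 \<Longrightarrow> isCont x2 t \<and> isCont y2 t"
  using sol S2e unfolding two_ind_solution_def by auto
lemma ev1: "t \<in> S1 \<Longrightarrow> x1 t = 0 \<and> y1 t = 1 \<and> (x1 \<longlongrightarrow> tau) (at_left t)"
  using sol unfolding two_ind_solution_def by auto

definition "A1 = cA1 sA sS sC muS muC a1"
definition "TT = cT sA sS sC muS muC a1 tau"

lemma A1pos: "A1 > 0" using h1 pos by (simp add: A1_def cA1_def)
lemma artanh_tau: "artanh tau > 0"
proof -
  have "tanh (artanh tau) > 0" using tau tanh_artanh_real[of tau] by simp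
  then show ?thesis by simp
qed
lemma TTpos: "TT > 0" using A1pos artanh_tau by (simp add: TT_def cT_def A1_def[symmetric])
lemma TT_eq: "A1 * TT = artanh tau" using A1pos by (simp add: TT_def cT_def A1_def[symmetric])


lemma step_e:
  assumes s: "s \<ge> 0"
  obtains e where "s < e" "e \<le> s + TT" "\<And>t. s < t \<Longrightarrow> t < e \<Longrightarrow> t \<notin> S1"
    "e \<in> S1 \<or> (e = s + TT \<and> e \<notin> S1)"
proof -
  define F where "F = S1 \<inter> {s<..s+TT}"
  have fF: "finite F" unfolding F_def by (rule finite_subset[OF _ S1fin[of "s+TT"]]) auto
  show ?thesis
  proof (cases "F = {}")
    case True
    show ?thesis
      by (rule that[of "s+TT"]) (use True TTpos in \<open>auto simp: F_def\<close>)
  next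
    case False
    have m: "Min F \<in> F" using fF False by simp
    show ?thesis
    proof (rule that[of "Min F"])
      show "s < Min F" "Min F \<le> s + TT" using m by (auto simp: F_def)
      show "t \<notin> S1" if "s < t" "t < Min F" for t
      proof
        assume "t \<in> S1"
        then have "t \<in> F" using that m by (auto simp: F_def)
        then have "Min F \<le> t" using fF by simp
        then show False using that by simp
      qed
      show "Min F \<in> S1 \<or> (Min F = s + TT \<and> Min F \<notin> S1)" using m by (auto simp: F_def)
    qed
  qed
qed

lemma y2_zero:
  assumes s: "s \<ge> 0" and y2s: "y2 s = 0" and "s < e" and noS: "\<And>t. s < t \<Longrightarrow> t < e \<Longrightarrow> t \<notin> S1"
    and t: "s \<le> t" "t \<le> e"
  shows "y2 t = 0"
proof -
  define phi where "phi = (\<lambda>u. y2 u * exp (r * u))"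
  have cy: "continuous_on {s..e} y2"
    by (rule cont_closed[of _ "- r * y2 s"]) (use rd[OF s] c2 s in auto)
  have "continuous_on {s..e} phi" unfolding phi_def
    by (intro continuous_intros cy)
  moreover have "DERIV phi u :> 0" if "s < u" "u < e" for u
  proof -
    have "(y2 has_real_derivative (- r * y2 u)) (at u)" using ad[of u] noS[OF that] that s by auto
    then have "DERIV phi u :> (- r * y2 u) * exp (r * u) + y2 u * (exp (r * u) * r)"
      unfolding phi_def by (auto intro!: derivative_eq_intros)
    then show ?thesis by (simp add: algebra_simps)
  qed
  ultimately have "phi t = phi s" using DERIV_isconst2[of s e phi t] t \<open>s < e\<close> by auto
  then show ?thesis using y2s by (simp add: phi_def)
qed

lemma x1_sol:
  assumes s: "s \<ge> 0" and x1s: "x1 s = 0" and y2s: "y2 s = 0" and "s < e"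
    and noS: "\<And>t. s < t \<Longrightarrow> t < e \<Longrightarrow> t \<notin> S1"
    and t: "s \<le> t" "t < e"
  shows "x1 t = tanh (A1 * (t - s))"
proof (cases "t = s")
  case True then show ?thesis using x1s by simp
next
  case False
  then have st: "s < t" using t by simp
  define psi where "psi = (\<lambda>u. artanh (x1 u) - A1 * (u - s))"
  have cx: "continuous_on {s..t} x1"
    by (rule cont_closed[of _ "xfield sA sS sC muS muC a1 (y2 s) (x1 s)"])
       (use rd[OF s] c1 noS s t in auto)
  have "continuous_on {s..t} psi" unfolding psi_def
    by (intro continuous_intros cx) (use rng s in auto)
  moreover have "DERIV psi u :> 0" if "s < u" "u < t" for u
  proof -
    have u0: "u > 0" "u \<notin> S1" using that s noS t by auto
    have y2u: "y2 u = 0" using y2_zero[OF s y2s \<open>s < e\<close> noS, of u] that t by auto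
    have xr: "-1 < x1 u" "x1 u < 1" using rng[of u] u0 by auto
    have "(x1 has_real_derivative xfield sA sS sC muS muC a1 0 (x1 u)) (at u)" using ad[OF u0] y2u by auto
    then have "DERIV psi u :> (1 / (1 - (x1 u)^2)) * xfield sA sS sC muS muC a1 0 (x1 u) - A1 * 1"
      unfolding psi_def using xr
      by (auto intro!: derivative_eq_intros DERIV_chain2[where f = artanh])
    moreover have "(1 / (1 - (x1 u)^2)) * xfield sA sS sC muS muC a1 0 (x1 u) - A1 * 1 = 0"
    proof -
      have "1 - (x1 u)^2 > 0" using xr by (simp add: abs_square_less_1)
      then show ?thesis by (simp add: xfield_def A1_def cA1_def field_simps power2_eq_square)
    qed
    ultimately show ?thesis by simp
  qed
  ultimately have "psi t = psi s" using DERIV_isconst_end[of s t psi] st by auto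
  then have "artanh (x1 t) = A1 * (t - s)" using x1s by (simp add: psi_def)
  then show ?thesis using rng[of t] s t by (metis tanh_artanh_real greaterThanLessThan_iff order_trans)
qed


lemma step1:
  assumes s: "s \<ge> 0" and x1s: "x1 s = 0" and y2s: "y2 s = 0"
  shows "s + TT \<in> S1" "\<And>t. s < t \<Longrightarrow> t < s + TT \<Longrightarrow> t \<notin> S1" "y2 (s + TT) = 0"
proof -
  obtain e where e: "s < e" "e \<le> s + TT" "\<And>t. s < t \<Longrightarrow> t < e \<Longrightarrow> t \<notin> S1"
    "e \<in> S1 \<or> (e = s + TT \<and> e \<notin> S1)" using step_e[OF s] by blast
  have ev: "eventually (\<lambda>t. x1 t = tanh (A1 * (t - s))) (at_left e)"
  proof -
    have "eventually (\<lambda>t. t \<in> {s<..<e}) (at_left e)" using eventually_at_left_real e(1) by blast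
    then show ?thesis by eventually_elim (use x1_sol[OF s x1s y2s e(1) e(3)] in auto)
  qed
  have lim0: "((\<lambda>t. tanh (A1 * (t - s))) \<longlongrightarrow> tanh (A1 * (e - s))) (at_left e)"
    by (intro tendsto_intros) (auto simp: cosh_real_pos[THEN less_imp_neq, symmetric])
  have lim: "(x1 \<longlongrightarrow> tanh (A1 * (e - s))) (at_left e)"
    using tendsto_cong[OF ev] lim0 by simp
  have eS: "e = s + TT \<and> e \<in> S1"
  proof (cases "e \<in> S1")
    case True
    have lt: "(x1 \<longlongrightarrow> tau) (at_left e)" using ev1 True by auto
    have "tau = tanh (A1 * (e - s))" using tendsto_unique[OF _ lt lim] by simp
    then have "artanh tau = A1 * (e - s)" by (simp add: artanh_tanh_real)
    then have "A1 * TT = A1 * (e - s)" using TT_eq by simp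
    then have "TT = e - s" using A1pos by simp
    then show ?thesis using True by simp
  next
    case False
    then have ee: "e = s + TT" using e(4) by simp
    have "e > 0" using e s by simp
    then have "isCont x1 e" using c1 False by auto
    then have lt: "(x1 \<longlongrightarrow> x1 e) (at_left e)"
      unfolding isCont_def by (rule tendsto_within_subset) simp
    have "x1 e = tanh (A1 * (e - s))" using tendsto_unique[OF _ lt lim] by simp
    also have "\<dots> = tau" using ee TT_eq tau by (simp add: tanh_artanh_real)
    finally have "x1 e = tau" .
    then show ?thesis using below[of e] \<open>e > 0\<close> by simp
  qed
  then show "s + TT \<in> S1" by metis
  show "\<And>t. s < t \<Longrightarrow> t < s + TT \<Longrightarrow> t \<notin> S1" using e(3) eS by simp
  show "y2 (s + TT) = 0" using y2_zero[OF s y2s e(1) e(3), of e] eS e(1) by simp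
qed


lemma y1_sol:
  assumes s: "s \<ge> 0" and noS: "\<And>t. s < t \<Longrightarrow> t < s + TT \<Longrightarrow> t \<notin> S1"
    and t: "s \<le> t" "t < s + TT"
  shows "y1 t = y1 s * exp (- r * (t - s))"
proof (cases "t = s")
  case True then show ?thesis by simp
next
  case False
  then have st: "s < t" using t by simp
  define chi where "chi = (\<lambda>u. y1 u * exp (r * (u - s)))"
  have cy: "continuous_on {s..t} y1"
    by (rule cont_closed[of _ "- r * y1 s"]) (use rd[OF s] c1 noS s t in auto)
  have "continuous_on {s..t} chi" unfolding chi_def
    by (intro continuous_intros cy)
  moreover have "DERIV chi u :> 0" if "s < u" "u < t" for u
  proof -
    have "(y1 has_real_derivative (- r * y1 u)) (at u)" using ad[of u] noS[of u] that s t by auto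
    then have "DERIV chi u :> (- r * y1 u) * exp (r * (u - s)) + y1 u * (exp (r * (u - s)) * (r * 1))"
      unfolding chi_def by (auto intro!: derivative_eq_intros)
    then show ?thesis by (simp add: algebra_simps)
  qed
  ultimately have "chi t = chi s" using DERIV_isconst_end[of s t chi] st by auto
  then have eq: "y1 t * exp (r * (t - s)) = y1 s" by (simp add: chi_def)
  have "y1 s * exp (- r * (t - s)) = y1 t * (exp (r * (t - s)) * exp (- r * (t - s)))"
    using eq by (simp add: algebra_simps)
  also have "\<dots> = y1 t" by (simp flip: exp_add)
  finally show ?thesis by simp
qed

definition "AA = cA sA sS sC muS muC a2"
definition "BB = cB sA sS sC muS muC r a2"
definition "CC = cC sS sC r"

lemma x2_step:
  assumes s: "s \<ge> 0" and noS: "\<And>t. s < t \<Longrightarrow> t < s + TT \<Longrightarrow> t \<notin> S1"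
    and Y: "y1 s = 0 \<or> y1 s = 1"
  shows "artanh (x2 (s + TT)) = artanh (x2 s) + AA * TT
           + y1 s * (BB * exp (- r * TT) + CC * exp (- 2 * r * TT) - BB - CC)"
proof -
  define Y where "Y = y1 s"
  define G where "G = (\<lambda>v. AA * v + Y * (BB * exp (- r * v) + CC * exp (- 2 * r * v)))"
  define om where "om = (\<lambda>u. artanh (x2 u) - G (u - s))"
  have cx: "continuous_on {s..s+TT} x2"
    by (rule cont_closed[of _ "xfield sA sS sC muS muC a2 (y1 s) (x2 s)"])
       (use rd[OF s] c2 s in auto)
  have "continuous_on {s..s+TT} om" unfolding om_def G_def
    by (intro continuous_intros cx) (use rng s in auto)
  moreover have "DERIV om u :> 0" if "s < u" "u < s + TT" for u
  proof -
    have u0: "u > 0" "u \<notin> S1" using that s noS by auto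
    have y1u: "y1 u = Y * exp (- r * (u - s))" using y1_sol[OF s noS, of u] that by (simp add: Y_def)
    have xr: "-1 < x2 u" "x2 u < 1" using rng[of u] u0 by auto
    define E where "E = exp (- r * (u - s))"
    have E2: "exp (- 2 * r * (u - s)) = E * E" unfolding E_def by (simp flip: exp_add)
    have "(x2 has_real_derivative xfield sA sS sC muS muC a2 (Y * E) (x2 u)) (at u)"
      using ad[OF u0] y1u by (auto simp: E_def)
    then have "DERIV om u :> (1 / (1 - (x2 u)^2)) * xfield sA sS sC muS muC a2 (Y * E) (x2 u)
        - (AA * 1 + Y * (BB * (exp (- r * (u - s)) * (- r * 1)) + CC * (exp (- 2 * r * (u - s)) * (- 2 * r * 1))))"
      unfolding om_def G_def using xr
      by (auto intro!: derivative_eq_intros DERIV_chain2[where f = artanh])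
    moreover have "(1 / (1 - (x2 u)^2)) * xfield sA sS sC muS muC a2 (Y * E) (x2 u)
        - (AA * 1 + Y * (BB * (exp (- r * (u - s)) * (- r * 1)) + CC * (exp (- 2 * r * (u - s)) * (- 2 * r * 1)))) = 0"
    proof -
      have "1 - (x2 u)^2 > 0" using xr by (simp add: abs_square_less_1)
      moreover have "Y = 0 \<or> Y = 1" using Y by (simp add: Y_def)
      ultimately show ?thesis using pos unfolding E2 E_def[symmetric]
        by (auto simp: xfield_def AA_def BB_def CC_def cA_def cB_def cC_def field_simps power2_eq_square)
    qed
    ultimately show ?thesis by simp
  qed
  ultimately have "om (s + TT) = om s" using DERIV_isconst_end[of s "s+TT" om] TTpos by auto
  then show ?thesis by (simp add: om_def G_def Y_def algebra_simps)
qed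


definition "MM = AA * TT + BB * exp (- r * TT) + CC * exp (- 2 * r * TT) - BB - CC"

lemma MM_eq: "MM = cM sA sS sC muS muC r tau a1 a2"
  by (simp add: MM_def cM_def Let_def AA_def BB_def CC_def TT_def)

lemma iter:
  assumes h3: "x1 0 = 0" "y1 0 = 0" "y2 0 = 0"
  shows "x1 (real k * TT) = 0 \<and> y2 (real k * TT) = 0 \<and> y1 (real k * TT) = (if k = 0 then 0 else 1) \<and>
     artanh (x2 (real k * TT)) = artanh (x2 0) + (if k = 0 then 0 else AA * TT + (real k - 1) * MM)"
proof (induction k)
  case 0 then show ?case using h3 by simp
next
  case (Suc k)
  define s where "s = real k * TT"
  have s0: "s \<ge> 0" using TTpos by (simp add: s_def)
  have sS: "real (Suc k) * TT = s + TT" by (simp add: s_def algebra_simps)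
  have IH: "x1 s = 0" "y2 s = 0" "y1 s = (if k = 0 then 0 else 1)"
     "artanh (x2 s) = artanh (x2 0) + (if k = 0 then 0 else AA * TT + (real k - 1) * MM)"
    using Suc.IH by (simp_all add: s_def)
  have inS: "s + TT \<in> S1" using step1(1)[OF s0 IH(1,2)] .
  have noS: "\<And>t. s < t \<Longrightarrow> t < s + TT \<Longrightarrow> t \<notin> S1" using step1(2)[OF s0 IH(1,2)] by blast
  have y2n: "y2 (s + TT) = 0" using step1(3)[OF s0 IH(1,2)] .
  have x2n: "artanh (x2 (s + TT)) = artanh (x2 s) + AA * TT
           + y1 s * (BB * exp (- r * TT) + CC * exp (- 2 * r * TT) - BB - CC)"
  proof (rule x2_step[OF s0 noS])
    show "y1 s = 0 \<or> y1 s = 1" using IH(3) by (cases "k = 0") auto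
  qed
  show ?case unfolding sS using ev1[OF inS] y2n x2n IH(3,4)
    by (cases "k = 0") (auto simp: MM_def algebra_simps)
qed

lemma no_S2:
  assumes h3: "x1 0 = 0" "y1 0 = 0" "y2 0 = 0"
    and Mpos: "cM sA sS sC muS muC r tau a1 a2 > 0"
  shows False
proof -
  have M: "MM > 0" using Mpos MM_eq by simp
  obtain n :: nat where n: "(artanh tau - artanh (x2 0) - AA * TT) / MM < real n"
    using reals_Archimedean2 by blast
  define k where "k = Suc n"
  have eq: "artanh (x2 (real k * TT)) = artanh (x2 0) + AA * TT + real n * MM"
    using iter[OF h3, of k] by (simp add: k_def)
  have "artanh tau - artanh (x2 0) - AA * TT < real n * MM" using n M by (simp add: field_simps)
  then have big: "artanh tau < artanh (x2 (real k * TT))" using eq by simp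
  have k0: "real k * TT \<ge> 0" using TTpos by simp
  have "artanh (x2 (real k * TT)) < artanh tau"
    using rng[OF k0] below[OF k0] tau by (intro artanh_less) auto
  then show False using big by simp
qed

end

theorem lemma2:
  fixes sA sS sC muS muC r tau a1 a2 :: real
    and x1 x2 y1 y2 :: "real \<Rightarrow> real" and S1 S2 :: "real set"
  assumes "sA \<ge> 0" "sS \<ge> 0" "sC > 0" "muS \<in> {0..1}" "muC > 0" "r > 0"
    and "tau \<in> {0<..<1}" "a1 \<in> {-1<..<1}" "a2 \<in> {-1<..<1}"
    and h1: "sA * a1 - sS * muS > 0"
    and h2: "sA * a2 - sS * muS \<le> 0"
    and h3: "x1 0 = 0" "y1 0 = 0" "y2 0 = 0" "x2 0 \<in> {-1<..<tau}"
    and sol: "two_ind_solution sA sS sC muS muC r tau a1 a2 x1 x2 y1 y2 S1 S2"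
    and Mpos: "cM sA sS sC muS muC r tau a1 a2 > 0"
  shows "\<exists>m::nat. m \<ge> 1 \<and>
     (let T = cT sA sS sC muS muC a1 tau;
          M = cM sA sS sC muS muC r tau a1 a2;
          xstar = - (1 - sqrt (1 - (tanh M)\<^sup>2)) / tanh M
      in (\<exists>t\<in>S2. 0 < t \<and> t \<le> (real m + 1) * T) \<or>
         (S2 \<inter> {0..real m * T} = {} \<and> x2 (real m * T) > xstar))"
proof (cases "S2 = {}")
  case True
  have False
  proof (rule no_S2[OF assms(3,5,6) _ _ h1 sol True h3(1-3) Mpos])
    show "0 < tau" "tau < 1" using assms(7) by auto
  qed
  then show ?thesis ..
next
  case False
  then obtain t where t: "t \<in> S2" by blast
  have t0: "t > 0" using sol t unfolding two_ind_solution_def by auto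
  define T where "T = cT sA sS sC muS muC a1 tau"
  have "tanh (artanh tau) > 0" using assms(7) tanh_artanh_real[of tau] by simp
  then have "artanh tau > 0" by simp
  moreover have "cA1 sA sS sC muS muC a1 > 0" using h1 assms(3,5) by (simp add: cA1_def)
  ultimately have T0: "T > 0" unfolding T_def cT_def by simp
  define m where "m = Suc (nat (ceiling (t / T)))"
  have "t / T \<le> real (nat (ceiling (t / T)))" by linarith
  then have "t \<le> real (nat (ceiling (t / T))) * T" using T0 by (simp add: field_simps)
  then have "t \<le> (real m + 1) * T" using T0 by (simp add: m_def algebra_simps)
  then show ?thesis using t t0 by (intro exI[of _ m]) (auto simp: m_def Let_def T_def)
qed

end
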